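(* Let $\mathbb{F}\in\{\mathbb{R},\mathbb{C}\}$, let $\{\varphi_i\}_{i=1}^M$ be a Parseval frame for $\mathbb{F}^N$, and let $0<k\leq N$. Assume that all $k$-element subsets of the frame span parallelotopes of the same $k$-dimensional volume, i.e. $v_k(\Phi_K)$ is the same for all $K\subseteq[M]$ with $|K|=k$. Then all $(k-1)$-element subsets also span parallelotopes of the same $(k-1)$-dimensional volume, i.e. $v_{k-1}(\Phi_J)$ is the same for all $J\subseteq[M]$ with $|J|=k-1$.
   Context: A Parseval frame for $\mathbb{F}^N$ is a family $\{\varphi_i\}_{i=1}^M\subseteq\mathbb{F}^N$ whose $N\times M$ matrix $\Phi$ (columns $\varphi_i$) satisfies $\Phi\Phi^*=I$. For $K\subseteq[M]$, $\Phi_K$ is the submatrix of columns indexed by $K$, and for an $N\times m$ matrix $F$ with $m\le N$, $v_m(F)=\sqrt{\det(F^*F)}$ (with $v_0=1$). *)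

theory Defs
  imports "Jordan_Normal_Form.Schur_Decomposition" "Jordan_Normal_Form.DL_Submatrix"
begin

text \<open>A Parseval frame for F^N with M vectors: the N x M synthesis matrix Phi
  (columns = frame vectors, indexed 0..M-1) satisfies Phi Phi^* = I.\<close>
definition parseval_frame :: "'a::conjugatable_field mat \<Rightarrow> nat \<Rightarrow> nat \<Rightarrow> bool" where
  "parseval_frame \<Phi> N M \<longleftrightarrow> \<Phi> \<in> carrier_mat N M \<and> \<Phi> * mat_adjoint \<Phi> = 1\<^sub>m N"

definition col_submatrix :: "'a mat \<Rightarrow> nat set \<Rightarrow> 'a mat" where
  "col_submatrix \<Phi> K = submatrix \<Phi> {0..<dim_row \<Phi>} K"

text \<open>v_m(F) = sqrt(det(F^* F)); over C the determinant is a nonnegative real,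
  so we take its real part.  For m = 0 the 0x0 determinant is 1, so v_0 = 1.\<close>
definition vol_real :: "real mat \<Rightarrow> real" where
  "vol_real F = sqrt (det (mat_adjoint F * F))"

definition vol_complex :: "complex mat \<Rightarrow> real" where
  "vol_complex F = sqrt (Re (det (mat_adjoint F * F)))"

end

theory Submission
  imports Defs
begin
lemma bordered:
  fixes X :: "'a::comm_ring_1 mat"
  assumes X: "X \<in> carrier_mat (Suc m) (Suc m)"
  shows "det X = X$$(m,m) * det (mat_delete X m m)
     - (\<Sum>i<m. \<Sum>l<m. X$$(i,m) * X$$(m,l) * cofactor (mat_delete X m m) i l)"
proof -
  have "det X = (\<Sum>i<Suc m. X$$(i,m) * cofactor X i m)"
    by (rule laplace_expansion_column[OF X]) simp
  also have "\<dots> = (\<Sum>i<m. X$$(i,m) * cofactor X i m) + X$$(m,m) * cofactor X m m" by simp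
  also have "cofactor X m m = det (mat_delete X m m)" unfolding cofactor_def by simp
  also have "(\<Sum>i<m. X$$(i,m) * cofactor X i m)
     = (\<Sum>i<m. - (\<Sum>l<m. X$$(i,m) * X$$(m,l) * cofactor (mat_delete X m m) i l))"
  proof (rule sum.cong[OF refl])
    fix i assume i: "i \<in> {..<m}"
    then obtain m' where m: "m = Suc m'" by (cases m) auto
    define Y where "Y = mat_delete X i m"
    have Y: "Y \<in> carrier_mat m m" unfolding Y_def using mat_delete_carrier[OF X] by auto
    have "det Y = (\<Sum>l<m. Y $$ (m',l) * cofactor Y m' l)"
      by (rule laplace_expansion_row[OF Y]) (simp add: m)
    also have "\<dots> = (\<Sum>l<m. X $$ (m,l) * ((-1)^(m'+l) * det (mat_delete (mat_delete X m m) i l)))"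
    proof (rule sum.cong[OF refl])
      fix l assume l: "l \<in> {..<m}"
      have "Y $$ (m',l) = X $$ (m,l)" using i l X m unfolding Y_def mat_delete_def by auto
      moreover have "mat_delete Y m' l = mat_delete (mat_delete X m m) i l"
        using i l X m unfolding Y_def mat_delete_def by (auto intro!: eq_matI)
      ultimately show "Y $$ (m',l) * cofactor Y m' l = X $$ (m,l) * ((-1)^(m'+l) * det (mat_delete (mat_delete X m m) i l))"
        unfolding cofactor_def by simp
    qed
    finally have dY: "det Y = \<dots>" .
    have sgn: "(-1::'a)^(i+m) * (-1)^(m'+l) = - ((-1)^(i+l))" for l
    proof -
      have sq: "(-1::'a)^m' * (-1)^m' = 1" by (simp add: power_mult_distrib[symmetric])
      have "(-1::'a)^(i+m) * (-1)^(m'+l) = - ((-1)^i * (-1)^l * ((-1)^m' * (-1)^m'))"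
        unfolding m by (simp add: power_add algebra_simps)
      then show ?thesis unfolding sq by (simp add: power_add)
    qed
    have "X$$(i,m) * cofactor X i m = X$$(i,m) * ((-1)^(i+m) * det Y)" unfolding cofactor_def Y_def by simp
    also have "\<dots> = (\<Sum>l<m. X$$(i,m) * X $$ (m,l) * (((-1)^(i+m) * (-1)^(m'+l)) * det (mat_delete (mat_delete X m m) i l)))"
      unfolding dY by (simp add: sum_distrib_left algebra_simps)
    also have "\<dots> = - (\<Sum>l<m. X$$(i,m) * X$$(m,l) * cofactor (mat_delete X m m) i l)"
      unfolding sgn cofactor_def by (simp add: sum_negf[symmetric] algebra_simps)
    finally show "X$$(i,m) * cofactor X i m = - (\<Sum>l<m. X$$(i,m) * X$$(m,l) * cofactor (mat_delete X m m) i l)" .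
  qed
  finally show ?thesis by (simp add: sum_negf algebra_simps)
qed
definition pm :: "'a mat \<Rightarrow> nat \<Rightarrow> (nat \<Rightarrow> nat) \<Rightarrow> 'a mat" where
  "pm A n f = mat n n (\<lambda>(r,s). A $$ (f r, f s))"

lemma signof_sq: "signof p * signof p = (1::'a::comm_ring_1)"
  by (simp add: sign_def)

lemma pm_det_inv:
  fixes A :: "'a::comm_ring_1 mat"
  assumes f: "bij_betw f {0..<n} S" and g: "bij_betw g {0..<n} S"
  shows "det (pm A n g) = det (pm A n f)"
proof -
  define p where "p = (\<lambda>r. if r < n then inv_into {0..<n} f (g r) else r)"
  have b1: "bij_betw (inv_into {0..<n} f \<circ> g) {0..<n} {0..<n}"
    using bij_betw_trans[OF g bij_betw_inv_into[OF f]] .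
  have b2: "bij_betw p {0..<n} {0..<n}"
    using b1 by (rule bij_betw_cong[THEN iffD1, rotated]) (auto simp: p_def)
  have pp: "p permutes {0..<n}"
    by (rule bij_imp_permutes[OF b2]) (auto simp: p_def)
  have fp: "f (p r) = g r" if "r < n" for r
  proof -
    have "g r \<in> f ` {0..<n}" using g f that by (auto simp: bij_betw_def)
    then show ?thesis using that by (simp add: p_def f_inv_into_f)
  qed
  have pn: "p r < n" if "r < n" for r using permutes_in_image[OF pp] that by auto
  define Y where "Y = pm A n f"
  have Y: "Y \<in> carrier_mat n n" unfolding Y_def pm_def by simp
  define Z where "Z = mat n n (\<lambda>(i,j). Y $$ (p i, j))"
  have Z: "Z \<in> carrier_mat n n" unfolding Z_def by simp
  have dZ: "det Z = signof p * det Y" unfolding Z_def by (rule det_permute_rows[OF Y pp])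
  have ZT: "transpose_mat Z \<in> carrier_mat n n" using Z by simp
  have e: "pm A n g = transpose_mat (mat n n (\<lambda>(i,j). transpose_mat Z $$ (p i, j)))"
    by (rule eq_matI) (auto simp: pm_def Z_def Y_def pn fp)
  have "det (pm A n g) = det (mat n n (\<lambda>(i,j). transpose_mat Z $$ (p i, j)))"
    unfolding e by (rule det_transpose[of _ n]) simp
  also have "\<dots> = signof p * det (transpose_mat Z)" by (rule det_permute_rows[OF ZT pp])
  also have "\<dots> = signof p * signof p * det Y" using det_transpose[OF Z] dZ by simp
  finally show ?thesis using signof_sq[of p, where 'a='a] unfolding Y_def by (metis mult_1)
qed
lemma core:
  fixes A :: "'a::comm_ring_1 mat"
  assumes A: "A \<in> carrier_mat M M" and AA: "A * A = A"
    and J: "J \<subseteq> {0..<M}" and f: "bij_betw f {0..<m} J"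
  shows "(\<Sum>i\<in>{0..<M}-J. det (pm A (Suc m) (\<lambda>r. if r < m then f r else i)))
    = ((\<Sum>i<M. A$$(i,i)) - of_nat m) * det (pm A m f)"
proof -
  define B where "B = pm A m f"
  have B: "B \<in> carrier_mat m m" unfolding B_def pm_def by simp
  have fJ: "f r \<in> J" if "r < m" for r using f that by (auto simp: bij_betw_def)
  have fM: "f r < M" if "r < m" for r using fJ[OF that] J by auto
  have finJ: "finite J" using J finite_subset by blast
  define C where "C = (\<lambda>r l. cofactor B r l)"
  have dX: "det (pm A (Suc m) (\<lambda>r. if r < m then f r else i)) =
     A$$(i,i) * det B - (\<Sum>r<m. \<Sum>l<m. C r l * (A$$(f r,i) * A$$(i,f l)))" for i
  proof -
    define X where "X = pm A (Suc m) (\<lambda>r. if r < m then f r else i)"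
    have X: "X \<in> carrier_mat (Suc m) (Suc m)" unfolding X_def pm_def by simp
    have md: "mat_delete X m m = B"
      by (rule eq_matI) (auto simp: X_def B_def pm_def mat_delete_def)
    show ?thesis unfolding X_def[symmetric] bordered[OF X] md C_def
      by (auto intro!: sum.cong simp: X_def pm_def algebra_simps)
  qed
  have T1: "(\<Sum>i\<in>{0..<M}-J. A$$(i,i)) = (\<Sum>i<M. A$$(i,i)) - (\<Sum>r<m. B$$(r,r))"
  proof -
    have "(\<Sum>i\<in>J. A$$(i,i)) = (\<Sum>r\<in>{0..<m}. A$$(f r, f r))"
      by (rule sum.reindex_bij_betw[OF f, symmetric])
    also have "\<dots> = (\<Sum>r<m. B$$(r,r))" by (auto intro!: sum.cong simp: B_def pm_def)
    finally have "(\<Sum>i\<in>J. A$$(i,i)) = (\<Sum>r<m. B$$(r,r))" .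
    moreover have "(\<Sum>i\<in>{0..<M}-J. A$$(i,i)) = (\<Sum>i\<in>{0..<M}. A$$(i,i)) - (\<Sum>i\<in>J. A$$(i,i))"
      using sum_diff[OF _ J] by simp
    ultimately show ?thesis by (simp add: lessThan_atLeast0)
  qed
  have T2: "(\<Sum>i\<in>{0..<M}-J. A$$(f r,i) * A$$(i,f l)) = B$$(r,l) - (\<Sum>p<m. B$$(r,p) * B$$(p,l))"
    if r: "r < m" and l: "l < m" for r l
  proof -
    have "(\<Sum>i\<in>{0..<M}. A$$(f r,i) * A$$(i,f l)) = (A * A) $$ (f r, f l)"
      using A fM[OF r] fM[OF l] by (simp add: scalar_prod_def row_def col_def)
    also have "\<dots> = B$$(r,l)" using r l by (simp add: AA B_def pm_def)
    finally have 1: "(\<Sum>i\<in>{0..<M}. A$$(f r,i) * A$$(i,f l)) = B$$(r,l)" .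
    have "(\<Sum>i\<in>J. A$$(f r,i) * A$$(i,f l)) = (\<Sum>p\<in>{0..<m}. A$$(f r,f p) * A$$(f p,f l))"
      by (rule sum.reindex_bij_betw[OF f, symmetric])
    also have "\<dots> = (\<Sum>p<m. B$$(r,p) * B$$(p,l))" using r l
      by (auto intro!: sum.cong simp: B_def pm_def)
    finally have 2: "(\<Sum>i\<in>J. A$$(f r,i) * A$$(i,f l)) = (\<Sum>p<m. B$$(r,p) * B$$(p,l))" .
    have "(\<Sum>i\<in>{0..<M}-J. A$$(f r,i) * A$$(i,f l)) = (\<Sum>i\<in>{0..<M}. A$$(f r,i) * A$$(i,f l)) - (\<Sum>i\<in>J. A$$(f r,i) * A$$(i,f l))"
      using sum_diff[OF _ J] by simp
    then show ?thesis using 1 2 by simp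
  qed
  have T3: "(\<Sum>r<m. \<Sum>l<m. C r l * B$$(r,l)) = of_nat m * det B"
  proof -
    have "(\<Sum>l<m. C r l * B$$(r,l)) = det B" if "r < m" for r
      using laplace_expansion_row[OF B that] by (simp add: C_def mult.commute)
    then show ?thesis by simp
  qed
  have T4: "(\<Sum>r<m. B$$(r,p) * C r l) = (if l = p then det B else 0)" if "l < m" "p < m" for l p
  proof -
    have "(adj_mat B * B) $$ (l,p) = (det B \<cdot>\<^sub>m 1\<^sub>m m) $$ (l,p)" using adj_mat(3)[OF B] by simp
    moreover have "(adj_mat B * B) $$ (l,p) = (\<Sum>r<m. B$$(r,p) * C r l)"
      using that B adj_mat(1)[OF B]
      by (auto simp: scalar_prod_def row_def col_def adj_mat_def C_def mult.commute lessThan_atLeast0 intro!: sum.cong)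
    ultimately show ?thesis using that by auto
  qed
  have T5: "(\<Sum>r<m. \<Sum>l<m. C r l * (\<Sum>p<m. B$$(r,p) * B$$(p,l))) = (\<Sum>l<m. B$$(l,l)) * det B"
  proof -
    have "(\<Sum>r<m. \<Sum>l<m. C r l * (\<Sum>p<m. B$$(r,p) * B$$(p,l)))
        = (\<Sum>r<m. \<Sum>l<m. \<Sum>p<m. B$$(p,l) * (B$$(r,p) * C r l))"
      by (simp add: sum_distrib_left algebra_simps)
    also have "\<dots> = (\<Sum>l<m. \<Sum>r<m. \<Sum>p<m. B$$(p,l) * (B$$(r,p) * C r l))"
      by (rule sum.swap)
    also have "\<dots> = (\<Sum>l<m. \<Sum>p<m. \<Sum>r<m. B$$(p,l) * (B$$(r,p) * C r l))"
    proof (rule sum.cong[OF refl])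
      fix l assume "l \<in> {..<m}" show "(\<Sum>r<m. \<Sum>p<m. B$$(p,l) * (B$$(r,p) * C r l)) = (\<Sum>p<m. \<Sum>r<m. B$$(p,l) * (B$$(r,p) * C r l))"
        by (rule sum.swap[of "\<lambda>r p. B$$(p,l) * (B$$(r,p) * C r l)"])
    qed
    also have "\<dots> = (\<Sum>l<m. \<Sum>p<m. B$$(p,l) * (\<Sum>r<m. B$$(r,p) * C r l))"
      by (simp add: sum_distrib_left)
    also have "\<dots> = (\<Sum>l<m. \<Sum>p<m. B$$(p,l) * (if l = p then det B else 0))"
      by (intro sum.cong refl) (simp add: T4)
    also have "\<dots> = (\<Sum>l<m. B$$(l,l) * det B)" by (simp add: if_distrib cong: if_cong)
    finally show ?thesis by (simp add: sum_distrib_right)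
  qed
  have "(\<Sum>i\<in>{0..<M}-J. det (pm A (Suc m) (\<lambda>r. if r < m then f r else i)))
     = (\<Sum>i\<in>{0..<M}-J. A$$(i,i)) * det B - (\<Sum>r<m. \<Sum>l<m. C r l * (\<Sum>i\<in>{0..<M}-J. A$$(f r,i) * A$$(i,f l)))"
  proof -
    have "(\<Sum>i\<in>{0..<M}-J. \<Sum>r<m. \<Sum>l<m. C r l * (A$$(f r,i) * A$$(i,f l)))
       = (\<Sum>r<m. \<Sum>i\<in>{0..<M}-J. \<Sum>l<m. C r l * (A$$(f r,i) * A$$(i,f l)))"
      by (rule sum.swap)
    also have "\<dots> = (\<Sum>r<m. \<Sum>l<m. \<Sum>i\<in>{0..<M}-J. C r l * (A$$(f r,i) * A$$(i,f l)))"
    proof (rule sum.cong[OF refl])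
      fix r assume "r \<in> {..<m}" show "(\<Sum>i\<in>{0..<M}-J. \<Sum>l<m. C r l * (A$$(f r,i) * A$$(i,f l))) = (\<Sum>l<m. \<Sum>i\<in>{0..<M}-J. C r l * (A$$(f r,i) * A$$(i,f l)))"
        by (rule sum.swap[of "\<lambda>i l. C r l * (A$$(f r,i) * A$$(i,f l))"])
    qed
    also have "\<dots> = (\<Sum>r<m. \<Sum>l<m. C r l * (\<Sum>i\<in>{0..<M}-J. A$$(f r,i) * A$$(i,f l)))"
      by (simp add: sum_distrib_left)
    finally have e: "(\<Sum>i\<in>{0..<M}-J. \<Sum>r<m. \<Sum>l<m. C r l * (A$$(f r,i) * A$$(i,f l)))
       = (\<Sum>r<m. \<Sum>l<m. C r l * (\<Sum>i\<in>{0..<M}-J. A$$(f r,i) * A$$(i,f l)))" .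
    show ?thesis unfolding dX sum_subtractf e by (simp add: sum_distrib_right)
  qed
  also have "\<dots> = (\<Sum>i\<in>{0..<M}-J. A$$(i,i)) * det B - (\<Sum>r<m. \<Sum>l<m. C r l * (B$$(r,l) - (\<Sum>p<m. B$$(r,p) * B$$(p,l))))"
    by (simp add: T2)
  also have "\<dots> = (\<Sum>i\<in>{0..<M}-J. A$$(i,i)) * det B - ((\<Sum>r<m. \<Sum>l<m. C r l * B$$(r,l))
       - (\<Sum>r<m. \<Sum>l<m. C r l * (\<Sum>p<m. B$$(r,p) * B$$(p,l))))"
    by (simp add: right_diff_distrib sum_subtractf)
  also have "\<dots> = ((\<Sum>i<M. A$$(i,i)) - of_nat m) * det B"
    unfolding T1 T3 T5 by (simp add: algebra_simps)
  finally show ?thesis unfolding B_def .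
qed
lemma mat_adjoint_dim[simp]:
  "dim_row (mat_adjoint A) = dim_col A" "dim_col (mat_adjoint A) = dim_row A"
  unfolding mat_adjoint_def by (simp_all add: mat_of_rows_def)

lemma mat_adjoint_index[simp]:
  "i < dim_col A \<Longrightarrow> j < dim_row A \<Longrightarrow> mat_adjoint A $$ (i,j) = conjugate (A $$ (j,i))"
  unfolding mat_adjoint_def by (simp add: mat_of_rows_def)

lemma pick_atLeast0: "t < N \<Longrightarrow> pick {0..<N} t = t"
proof -
  assume t: "t < N"
  have "card {a\<in>{0..<N}. a < t} = t"
  proof -
    have "{a\<in>{0..<N}. a < t} = {0..<t}" using t by auto
    then show ?thesis by simp
  qed
  then show ?thesis using pick_card_in_set[of t "{0..<N}"] t by simp
qed

lemma pick_bij: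
  assumes "finite K" shows "bij_betw (pick K) {0..<card K} K"
proof -
  have inj: "inj_on (pick K) {0..<card K}"
  proof (rule inj_onI)
    fix x y assume x: "x \<in> {0..<card K}" and y: "y \<in> {0..<card K}" and e: "pick K x = pick K y"
    show "x = y"
    proof (rule ccontr)
      assume "x \<noteq> y"
      then have "x < y \<or> y < x" by auto
      then show False using pick_mono[of y K x] pick_mono[of x K y] x y e by auto
    qed
  qed
  have sub: "pick K ` {0..<card K} \<subseteq> K" using pick_in_set by auto
  have "card (pick K ` {0..<card K}) = card K" using card_image[OF inj] by simp
  then have "pick K ` {0..<card K} = K" using card_subset_eq[OF assms sub] by simp
  then show ?thesis using inj unfolding bij_betw_def by simp
qed

lemma gram_sub:
  fixes \<Phi> :: "'a::conjugatable_field mat"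
  assumes \<Phi>: "\<Phi> \<in> carrier_mat N M" and K: "K \<subseteq> {0..<M}"
  shows "mat_adjoint (col_submatrix \<Phi> K) * col_submatrix \<Phi> K
     = pm (mat_adjoint \<Phi> * \<Phi>) (card K) (pick K)"
proof -
  have finK: "finite K" using K finite_subset by blast
  have c1: "{i. i < dim_row \<Phi> \<and> i \<in> {0..<N}} = {0..<N}" using \<Phi> by auto
  have c2: "{j. j < dim_col \<Phi> \<and> j \<in> K} = K" using \<Phi> K by auto
  have S: "col_submatrix \<Phi> K = mat N (card K) (\<lambda>(t,s). \<Phi> $$ (t, pick K s))"
    unfolding col_submatrix_def submatrix_def c1 c2 using \<Phi>
    by (intro eq_matI) (auto simp: pick_atLeast0)
  have pK: "s < card K \<Longrightarrow> pick K s < M" for s using pick_in_set[of s K] K by auto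
  show ?thesis unfolding S
    by (rule eq_matI) (use \<Phi> pK in \<open>auto simp: pm_def scalar_prod_def\<close>)
qed

lemma frame_sum:
  fixes \<Phi> :: "'a::conjugatable_field mat"
  assumes pf: "parseval_frame \<Phi> N M" and J: "J \<subseteq> {0..<M}"
  shows "(\<Sum>i\<in>{0..<M}-J. det (mat_adjoint (col_submatrix \<Phi> (insert i J)) * col_submatrix \<Phi> (insert i J)))
     = (of_nat N - of_nat (card J)) * det (mat_adjoint (col_submatrix \<Phi> J) * col_submatrix \<Phi> J)"
proof -
  have \<Phi>: "\<Phi> \<in> carrier_mat N M" and PP: "\<Phi> * mat_adjoint \<Phi> = 1\<^sub>m N"
    using pf unfolding parseval_frame_def by auto
  define G where "G = mat_adjoint \<Phi> * \<Phi>"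
  have Ad: "mat_adjoint \<Phi> \<in> carrier_mat M N" using \<Phi> by auto
  have G: "G \<in> carrier_mat M M" unfolding G_def using \<Phi> by auto
  have GG: "G * G = G"
  proof -
    have G': "mat_adjoint \<Phi> * \<Phi> \<in> carrier_mat M M" using G unfolding G_def .
    have e1: "G * G = mat_adjoint \<Phi> * (\<Phi> * (mat_adjoint \<Phi> * \<Phi>))"
      unfolding G_def by (rule assoc_mult_mat[OF Ad \<Phi> G'])
    have e2: "\<Phi> * (mat_adjoint \<Phi> * \<Phi>) = (\<Phi> * mat_adjoint \<Phi>) * \<Phi>"
      by (rule assoc_mult_mat[OF \<Phi> Ad \<Phi>, symmetric])
    have e3: "(\<Phi> * mat_adjoint \<Phi>) * \<Phi> = \<Phi>" unfolding PP using \<Phi> by simp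
    have "G * G = mat_adjoint \<Phi> * \<Phi>" using e1 e2 e3 by simp
    then show ?thesis unfolding G_def .
  qed
  have tr: "(\<Sum>i<M. G$$(i,i)) = of_nat N"
  proof -
    have "(\<Sum>i<M. G$$(i,i)) = (\<Sum>i<M. \<Sum>t<N. conjugate (\<Phi>$$(t,i)) * \<Phi>$$(t,i))"
      using \<Phi> by (auto simp: G_def scalar_prod_def lessThan_atLeast0 intro!: sum.cong)
    also have "\<dots> = (\<Sum>t<N. \<Sum>i<M. \<Phi>$$(t,i) * conjugate (\<Phi>$$(t,i)))"
      by (subst sum.swap) (simp add: mult.commute)
    also have "\<dots> = (\<Sum>t<N. (\<Phi> * mat_adjoint \<Phi>) $$ (t,t))"
      using \<Phi> by (auto simp: scalar_prod_def lessThan_atLeast0 intro!: sum.cong)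
    also have "\<dots> = of_nat N" unfolding PP by simp
    finally show ?thesis .
  qed
  have finJ: "finite J" using J finite_subset by blast
  define m where "m = card J"
  have f: "bij_betw (pick J) {0..<m} J" unfolding m_def by (rule pick_bij[OF finJ])
  have tm: "det (mat_adjoint (col_submatrix \<Phi> (insert i J)) * col_submatrix \<Phi> (insert i J))
     = det (pm G (Suc m) (\<lambda>r. if r < m then pick J r else i))" if i: "i \<in> {0..<M}-J" for i
  proof -
    have iJ: "insert i J \<subseteq> {0..<M}" using i J by auto
    have ci: "card (insert i J) = Suc m" using i finJ unfolding m_def by simp
    have b1: "bij_betw (pick (insert i J)) {0..<Suc m} (insert i J)"
      using pick_bij[of "insert i J"] finJ ci by simp
    have b2: "bij_betw (\<lambda>r. if r < m then pick J r else i) {0..<Suc m} (insert i J)"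
    proof -
      have "bij_betw (\<lambda>r. if r < m then pick J r else i) ({0..<m} \<union> {m}) (J \<union> {i})"
      proof (rule bij_betw_combine)
        show "bij_betw (\<lambda>r. if r < m then pick J r else i) {0..<m} J"
          using f by (rule bij_betw_cong[THEN iffD1, rotated]) auto
        show "bij_betw (\<lambda>r. if r < m then pick J r else i) {m} {i}" by (simp add: bij_betw_def)
        show "J \<inter> {i} = {}" using i by auto
      qed
      moreover have "{0..<m} \<union> {m} = {0..<Suc m}" "J \<union> {i} = insert i J" by auto
      ultimately show ?thesis by simp
    qed
    show ?thesis unfolding gram_sub[OF \<Phi> iJ] ci G_def[symmetric]
      by (rule pm_det_inv[OF b2 b1])
  qed
  have "(\<Sum>i\<in>{0..<M}-J. det (mat_adjoint (col_submatrix \<Phi> (insert i J)) * col_submatrix \<Phi> (insert i J)))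
     = (\<Sum>i\<in>{0..<M}-J. det (pm G (Suc m) (\<lambda>r. if r < m then pick J r else i)))"
    by (rule sum.cong[OF refl]) (rule tm)
  also have "\<dots> = ((\<Sum>i<M. G$$(i,i)) - of_nat m) * det (pm G m (pick J))"
    by (rule core[OF G GG J f])
  also have "pm G m (pick J) = mat_adjoint (col_submatrix \<Phi> J) * col_submatrix \<Phi> J"
    unfolding gram_sub[OF \<Phi> J] G_def m_def ..
  finally show ?thesis unfolding tr m_def .
qed
lemma sqrt_inv: "sqrt (x::real) = c \<Longrightarrow> x = c * \<bar>c\<bar>"
proof (cases "x \<ge> 0")
  case True
  assume "sqrt x = c"
  then show ?thesis using True by (auto simp: abs_of_nonneg)
next
  case False
  assume e: "sqrt x = c"
  have "sqrt x = - sqrt (- x)" by (simp add: real_sqrt_minus)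
  moreover have "sqrt (-x) * sqrt (-x) = -x" using False by simp
  ultimately show ?thesis using e False by (auto simp: abs_if)
qed

lemma card_rest: "J \<subseteq> {0..<M} \<Longrightarrow> card ({0..<M} - J) = M - card J"
  by (simp add: card_Diff_subset finite_subset)

lemma real_part:
  fixes \<Phi> :: "real mat"
  assumes pf: "parseval_frame \<Phi> N M" and k: "0 < k" "k \<le> N"
    and H: "\<forall>K. K \<subseteq> {0..<M} \<longrightarrow> card K = k \<longrightarrow> vol_real (col_submatrix \<Phi> K) = c"
  shows "\<exists>c. \<forall>J. J \<subseteq> {0..<M} \<longrightarrow> card J = k - 1 \<longrightarrow> vol_real (col_submatrix \<Phi> J) = c"
proof -
  define D where "D = c * \<bar>c\<bar>"
  have dK: "det (mat_adjoint (col_submatrix \<Phi> K) * col_submatrix \<Phi> K) = D"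
    if "K \<subseteq> {0..<M}" "card K = k" for K
    using H that sqrt_inv unfolding vol_real_def D_def by blast
  show ?thesis
  proof (intro exI allI impI)
    fix J assume J: "J \<subseteq> {0..<M}" and cJ: "card J = k - 1"
    have finJ: "finite J" using J finite_subset by blast
    have "(\<Sum>i\<in>{0..<M}-J. det (mat_adjoint (col_submatrix \<Phi> (insert i J)) * col_submatrix \<Phi> (insert i J)))
        = (\<Sum>i\<in>{0..<M}-J. D)"
    proof (rule sum.cong[OF refl])
      fix i assume i: "i \<in> {0..<M}-J"
      show "det (mat_adjoint (col_submatrix \<Phi> (insert i J)) * col_submatrix \<Phi> (insert i J)) = D"
        by (rule dK) (use i J finJ cJ k in auto)
    qed
    then have "real (M - (k-1)) * D = (real N - real (k-1)) * det (mat_adjoint (col_submatrix \<Phi> J) * col_submatrix \<Phi> J)"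
      using frame_sum[OF pf J] card_rest[OF J] cJ by simp
    moreover have "real N - real (k-1) \<noteq> 0" using k by auto
    ultimately have "det (mat_adjoint (col_submatrix \<Phi> J) * col_submatrix \<Phi> J) = real (M - (k-1)) * D / (real N - real (k-1))"
      by (simp add: field_simps)
    then show "vol_real (col_submatrix \<Phi> J) = sqrt (real (M - (k-1)) * D / (real N - real (k-1)))"
      unfolding vol_real_def by simp
  qed
qed

lemma complex_part:
  fixes \<Phi> :: "complex mat"
  assumes pf: "parseval_frame \<Phi> N M" and k: "0 < k" "k \<le> N"
    and H: "\<forall>K. K \<subseteq> {0..<M} \<longrightarrow> card K = k \<longrightarrow> vol_complex (col_submatrix \<Phi> K) = c"
  shows "\<exists>c. \<forall>J. J \<subseteq> {0..<M} \<longrightarrow> card J = k - 1 \<longrightarrow> vol_complex (col_submatrix \<Phi> J) = c"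
proof -
  define D where "D = c * \<bar>c\<bar>"
  have dK: "Re (det (mat_adjoint (col_submatrix \<Phi> K) * col_submatrix \<Phi> K)) = D"
    if "K \<subseteq> {0..<M}" "card K = k" for K
    using H that sqrt_inv unfolding vol_complex_def D_def by blast
  show ?thesis
  proof (intro exI allI impI)
    fix J assume J: "J \<subseteq> {0..<M}" and cJ: "card J = k - 1"
    have finJ: "finite J" using J finite_subset by blast
    have "(\<Sum>i\<in>{0..<M}-J. Re (det (mat_adjoint (col_submatrix \<Phi> (insert i J)) * col_submatrix \<Phi> (insert i J))))
        = (\<Sum>i\<in>{0..<M}-J. D)"
    proof (rule sum.cong[OF refl])
      fix i assume i: "i \<in> {0..<M}-J"
      show "Re (det (mat_adjoint (col_submatrix \<Phi> (insert i J)) * col_submatrix \<Phi> (insert i J))) = D"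
        by (rule dK) (use i J finJ cJ k in auto)
    qed
    moreover have "Re (\<Sum>i\<in>{0..<M}-J. det (mat_adjoint (col_submatrix \<Phi> (insert i J)) * col_submatrix \<Phi> (insert i J)))
       = (real N - real (k-1)) * Re (det (mat_adjoint (col_submatrix \<Phi> J) * col_submatrix \<Phi> J))"
      unfolding frame_sum[OF pf J] cJ by simp
    ultimately have "real (M - (k-1)) * D = (real N - real (k-1)) * Re (det (mat_adjoint (col_submatrix \<Phi> J) * col_submatrix \<Phi> J))"
      using card_rest[OF J] cJ by (simp add: Re_sum)
    moreover have "real N - real (k-1) \<noteq> 0" using k by auto
    ultimately have "Re (det (mat_adjoint (col_submatrix \<Phi> J) * col_submatrix \<Phi> J)) = real (M - (k-1)) * D / (real N - real (k-1))"
      by (simp add: field_simps)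
    then show "vol_complex (col_submatrix \<Phi> J) = sqrt (real (M - (k-1)) * D / (real N - real (k-1)))"
      unfolding vol_complex_def by simp
  qed
qed

theorem theorem9:
  shows "(\<forall>(\<Phi>::real mat) N M k.
            parseval_frame \<Phi> N M \<longrightarrow> 0 < k \<longrightarrow> k \<le> N \<longrightarrow>
            (\<exists>c. \<forall>K. K \<subseteq> {0..<M} \<longrightarrow> card K = k \<longrightarrow> vol_real (col_submatrix \<Phi> K) = c) \<longrightarrow>
            (\<exists>c. \<forall>J. J \<subseteq> {0..<M} \<longrightarrow> card J = k - 1 \<longrightarrow> vol_real (col_submatrix \<Phi> J) = c))
       \<and> (\<forall>(\<Phi>::complex mat) N M k.
            parseval_frame \<Phi> N M \<longrightarrow> 0 < k \<longrightarrow> k \<le> N \<longrightarrow>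
            (\<exists>c. \<forall>K. K \<subseteq> {0..<M} \<longrightarrow> card K = k \<longrightarrow> vol_complex (col_submatrix \<Phi> K) = c) \<longrightarrow>
            (\<exists>c. \<forall>J. J \<subseteq> {0..<M} \<longrightarrow> card J = k - 1 \<longrightarrow> vol_complex (col_submatrix \<Phi> J) = c))"
proof (intro conjI allI impI)
  fix \<Phi> :: "real mat" and N M k
  assume "parseval_frame \<Phi> N M" "0 < k" "k \<le> N"
    "\<exists>c. \<forall>K. K \<subseteq> {0..<M} \<longrightarrow> card K = k \<longrightarrow> vol_real (col_submatrix \<Phi> K) = c"
  then show "\<exists>c. \<forall>J. J \<subseteq> {0..<M} \<longrightarrow> card J = k - 1 \<longrightarrow> vol_real (col_submatrix \<Phi> J) = c"
    using real_part by metis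
next
  fix \<Phi> :: "complex mat" and N M k
  assume "parseval_frame \<Phi> N M" "0 < k" "k \<le> N"
    "\<exists>c. \<forall>K. K \<subseteq> {0..<M} \<longrightarrow> card K = k \<longrightarrow> vol_complex (col_submatrix \<Phi> K) = c"
  then show "\<exists>c. \<forall>J. J \<subseteq> {0..<M} \<longrightarrow> card J = k - 1 \<longrightarrow> vol_complex (col_submatrix \<Phi> J) = c"
    using complex_part by metis
qed
end
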